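(* Let $R$ be a ring with identity and $a,b,c\in R$. Then: (i) $a$ is $(b,c)$-invertible if and only if $a$ is both left and right $(b,c)$-invertible; (ii) $a$ is $(b,c)$-invertible if and only if $b$ and $c$ are regular and $a$ is both left annihilator and right annihilator $(b,c)$-invertible.
   Context: An element $x$ is regular if $x=xzx$ for some $z\in R$. For $x\in R$: $xR=\{xr:r\in R\}$, $Rx=\{rx:r\in R\}$, $x^\circ=\{r: xr=0\}$, ${}^\circ x=\{r: rx=0\}$. $a$ is $(b,c)$-invertible if there is $y\in R$ with $y\in (bRy)\cap(yRc)$, $yab=b$ and $cay=c$. $a$ is left $(b,c)$-invertible if there is $y$ with $Ry\subseteq Rc$ and $yab=b$; right $(b,c)$-invertible if there is $y$ with $yR\subseteq bR$ and $cay=c$; right annihilator $(b,c)$-invertible if there is $y$ with $c^\circ\subseteq y^\circ$ and $yab=b$; left annihilator $(b,c)$-invertible if there is $y$ with ${}^\circ b\subseteq {}^\circ y$ and $cay=c$. *)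

theory Defs
  imports Main
begin

definition regular :: "'a::ring_1 \<Rightarrow> bool" where
  "regular x \<longleftrightarrow> (\<exists>z. x = x * z * x)"

definition rprinc :: "'a::ring_1 \<Rightarrow> 'a set" where
  "rprinc x = {x * r | r. True}"

definition lprinc :: "'a::ring_1 \<Rightarrow> 'a set" where
  "lprinc x = {r * x | r. True}"

definition rann :: "'a::ring_1 \<Rightarrow> 'a set" where
  "rann x = {r. x * r = 0}"

definition lann :: "'a::ring_1 \<Rightarrow> 'a set" where
  "lann x = {r. r * x = 0}"

definition bc_invertible :: "'a::ring_1 \<Rightarrow> 'a \<Rightarrow> 'a \<Rightarrow> bool" where
  "bc_invertible a b c \<longleftrightarrow>
     (\<exists>y. y \<in> {b * r * y | r. True} \<inter> {y * r * c | r. True} \<and> y * a * b = b \<and> c * a * y = c)"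

definition left_bc_invertible :: "'a::ring_1 \<Rightarrow> 'a \<Rightarrow> 'a \<Rightarrow> bool" where
  "left_bc_invertible a b c \<longleftrightarrow> (\<exists>y. lprinc y \<subseteq> lprinc c \<and> y * a * b = b)"

definition right_bc_invertible :: "'a::ring_1 \<Rightarrow> 'a \<Rightarrow> 'a \<Rightarrow> bool" where
  "right_bc_invertible a b c \<longleftrightarrow> (\<exists>y. rprinc y \<subseteq> rprinc b \<and> c * a * y = c)"

definition rann_bc_invertible :: "'a::ring_1 \<Rightarrow> 'a \<Rightarrow> 'a \<Rightarrow> bool" where
  "rann_bc_invertible a b c \<longleftrightarrow> (\<exists>y. rann c \<subseteq> rann y \<and> y * a * b = b)"

definition lann_bc_invertible :: "'a::ring_1 \<Rightarrow> 'a \<Rightarrow> 'a \<Rightarrow> bool" where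
  "lann_bc_invertible a b c \<longleftrightarrow> (\<exists>y. lann b \<subseteq> lann y \<and> c * a * y = c)"

end

theory Submission
  imports Defs
begin

lemma lr_to_bc:
  fixes a b c y1 y2 t u :: "'a::ring_1"
  assumes h1: "y1 = t * c" "y1 * a * b = b" and h2: "y2 = b * u" "c * a * y2 = c"
  shows "bc_invertible a b c"
proof -
  have e1: "y1 = y1 * a * y2"
  proof -
    have "y1 = t * (c * a * y2)" using h1 h2 by simp
    also have "\<dots> = y1 * a * y2" using h1 by (simp add: mult.assoc)
    finally show ?thesis .
  qed
  have e2: "y2 = y1 * a * y2"
  proof -
    have "y2 = (y1 * a * b) * u" using h1 h2 by simp
    also have "\<dots> = y1 * a * y2" using h2 by (simp add: mult.assoc)
    finally show ?thesis .
  qed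
  have eq: "y1 = y2" using e1 e2 by simp
  have A: "y1 = b * (u * a) * y1"
  proof -
    have "y1 = y1 * a * y1" using e1 eq by simp
    also have "\<dots> = b * (u * a) * y1" using eq h2 by (simp add: mult.assoc)
    finally show ?thesis .
  qed
  have B: "y1 = y1 * (a * t) * c"
  proof -
    have "y1 = y1 * a * y1" using e1 eq by simp
    also have "\<dots> = y1 * (a * t) * c" using h1 by (simp add: mult.assoc)
    finally show ?thesis .
  qed
  show ?thesis unfolding bc_invertible_def
    using A B h1 h2 eq by blast
qed

lemma bc_unfold:
  fixes a b c :: "'a::ring_1" assumes "bc_invertible a b c"
  shows "\<exists>y r s. y = b * r * y \<and> y = y * s * c \<and> y * a * b = b \<and> c * a * y = c"
  using assms unfolding bc_invertible_def by auto

theorem corollary2p7: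
  fixes a b c :: "'a::ring_1"
  shows "(bc_invertible a b c \<longleftrightarrow> left_bc_invertible a b c \<and> right_bc_invertible a b c)
       \<and> (bc_invertible a b c \<longleftrightarrow> regular b \<and> regular c \<and>
            lann_bc_invertible a b c \<and> rann_bc_invertible a b c)"
proof -
  have F: "left_bc_invertible a b c \<and> right_bc_invertible a b c \<and> regular b \<and> regular c \<and>
            lann_bc_invertible a b c \<and> rann_bc_invertible a b c" if inv: "bc_invertible a b c"
  proof -
    obtain y r s where y: "y = b * r * y" "y = y * s * c" "y * a * b = b" "c * a * y = c"
      using bc_unfold[OF inv] by blast
    have L: "left_bc_invertible a b c" unfolding left_bc_invertible_def lprinc_def
    proof (intro exI conjI)
      show "{x * y |x. True} \<subseteq> {x * c |x. True}"
      proof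
        fix z assume "z \<in> {x * y |x. True}"
        then obtain x where "z = x * y" by blast
        moreover have "x * y = x * (y * s * c)" using arg_cong[where f="\<lambda>v. x * v", OF y(2)] .
        ultimately have "z = x * (y * s * c)" by (rule trans)
        then have "z = (x * y * s) * c" by (simp only: mult.assoc)
        then show "z \<in> {x * c |x. True}" by blast
      qed
    qed (rule y(3))
    have R: "right_bc_invertible a b c" unfolding right_bc_invertible_def rprinc_def
    proof (intro exI conjI)
      show "{y * x |x. True} \<subseteq> {b * x |x. True}"
      proof
        fix z assume "z \<in> {y * x |x. True}"
        then obtain x where "z = y * x" by blast
        moreover have "y * x = (b * r * y) * x" using arg_cong[where f="\<lambda>v. v * x", OF y(1)] .
        ultimately have "z = (b * r * y) * x" by (rule trans)
        then have "z = b * (r * y * x)" by (simp only: mult.assoc)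
        then show "z \<in> {b * x |x. True}" by blast
      qed
    qed (rule y(4))
    have rb: "regular b" unfolding regular_def
    proof
      have "b = y * a * b" using y(3) by simp
      also have "\<dots> = (b * r * y) * a * b" using arg_cong[where f="\<lambda>v. v * a * b", OF y(1)] .
      also have "\<dots> = b * (r * y * a) * b" by (simp only: mult.assoc)
      finally show "b = b * (r * y * a) * b" .
    qed
    have rc: "regular c" unfolding regular_def
    proof
      have "c = c * a * y" using y(4) by simp
      also have "\<dots> = c * a * (y * s * c)" using arg_cong[where f="\<lambda>v. c * a * v", OF y(2)] .
      also have "\<dots> = c * (a * y * s) * c" by (simp only: mult.assoc)
      finally show "c = c * (a * y * s) * c" .
    qed
    have la: "lann_bc_invertible a b c" unfolding lann_bc_invertible_def lann_def
    proof (intro exI conjI)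
      show "{x. x * b = 0} \<subseteq> {x. x * y = 0}"
      proof
        fix x assume "x \<in> {x. x * b = 0}"
        then have "x * b = 0" by simp
        moreover have "x * y = x * (b * r * y)" using arg_cong[where f="\<lambda>v. x * v", OF y(1)] .
        then have "x * y = x * b * r * y" by (simp only: mult.assoc)
        then have "x * y = 0" using \<open>x * b = 0\<close> by simp
        then show "x \<in> {x. x * y = 0}" by simp
      qed
    qed (rule y(4))
    have ra: "rann_bc_invertible a b c" unfolding rann_bc_invertible_def rann_def
    proof (intro exI conjI)
      show "{x. c * x = 0} \<subseteq> {x. y * x = 0}"
      proof
        fix x assume "x \<in> {x. c * x = 0}"
        then have "c * x = 0" by simp
        moreover have "y * x = (y * s * c) * x" using arg_cong[where f="\<lambda>v. v * x", OF y(2)] .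
        then have "y * x = y * s * (c * x)" by (simp only: mult.assoc)
        then have "y * x = 0" using \<open>c * x = 0\<close> by simp
        then show "x \<in> {x. y * x = 0}" by simp
      qed
    qed (rule y(3))
    show ?thesis using L R rb rc la ra by blast
  qed
  have G1: "bc_invertible a b c" if hL: "left_bc_invertible a b c" and hR: "right_bc_invertible a b c"
  proof -
    obtain y1 where y1: "lprinc y1 \<subseteq> lprinc c" "y1 * a * b = b"
      using hL unfolding left_bc_invertible_def by blast
    obtain y2 where y2: "rprinc y2 \<subseteq> rprinc b" "c * a * y2 = c"
      using hR unfolding right_bc_invertible_def by blast
    have "1 * y1 \<in> lprinc y1" unfolding lprinc_def by blast
    then have "y1 \<in> lprinc c" using y1(1) by auto
    then obtain t where t: "y1 = t * c" unfolding lprinc_def by blast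
    have "y2 * 1 \<in> rprinc y2" unfolding rprinc_def by blast
    then have "y2 \<in> rprinc b" using y2(1) by auto
    then obtain u where u: "y2 = b * u" unfolding rprinc_def by blast
    show ?thesis using lr_to_bc[OF t y1(2) u y2(2)] .
  qed
  have G2: "bc_invertible a b c" if h: "regular b" "regular c" "lann_bc_invertible a b c" "rann_bc_invertible a b c"
  proof -
    obtain z where z: "b = b * z * b" using h(1) unfolding regular_def by blast
    obtain w where w: "c = c * w * c" using h(2) unfolding regular_def by blast
    obtain y2 where y2: "lann b \<subseteq> lann y2" "c * a * y2 = c"
      using h(3) unfolding lann_bc_invertible_def by blast
    obtain y1 where y1: "rann c \<subseteq> rann y1" "y1 * a * b = b"
      using h(4) unfolding rann_bc_invertible_def by blast
    have "c * (1 - w * c) = 0"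
    proof -
      have "c * (1 - w * c) = c - c * w * c" by (simp add: right_diff_distrib mult.assoc)
      then show ?thesis using w by simp
    qed
    then have "y1 * (1 - w * c) = 0" using y1(1) unfolding rann_def by auto
    then have "y1 - y1 * w * c = 0" by (simp add: right_diff_distrib mult.assoc)
    then have t: "y1 = (y1 * w) * c" by simp
    have "(1 - b * z) * b = 0"
    proof -
      have "(1 - b * z) * b = b - b * z * b" by (simp add: left_diff_distrib)
      then show ?thesis using z by simp
    qed
    then have "(1 - b * z) * y2 = 0" using y2(1) unfolding lann_def by auto
    then have "y2 - b * z * y2 = 0" by (simp add: left_diff_distrib)
    then have u: "y2 = b * (z * y2)" by (simp add: mult.assoc)
    show ?thesis using lr_to_bc[OF t y1(2) u y2(2)] .
  qed
  show ?thesis using F G1 G2 by blast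
qed

end
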